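(* Let $W$ be a standard Brownian motion, $\kappa:[0,1]\to[0,1]$ with $\kappa(0)=0$, $\kappa(1)=1$ H\"older continuous with some exponent $\tau>1/2$, $B(t)=W(t)-\kappa(t)W(1)$, and $X(t)=\sum_{n=0}^\infty\alpha^nB(\{b^nt\})$ with $\alpha\in(0,1)$, $b\in\{2,3,\dots\}$ and $\alpha^2b<1$. (a) There is a constant $L>0$ with $\mathbb E[(X(t)-X(s))^2]\le L|t-s|$ for all $s,t\in[0,1]$. (b) For every $\lambda\in(0,1)$ there is $\varepsilon>0$ such that $\mathbb E[(X(t)-X(s))^2]\ge\lambda|t-s|$ for all $s,t\in[0,1]$ with $|t-s|<\varepsilon$.
   Context: $\{x\}$ denotes the fractional part of $x\ge0$. *)

theory Defs
  imports "HOL-Probability.Probability"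
begin

definition std_brownian_motion :: "'a measure \<Rightarrow> (real \<Rightarrow> 'a \<Rightarrow> real) \<Rightarrow> bool" where
  "std_brownian_motion M W \<longleftrightarrow>
     prob_space M \<and>
     (\<forall>t. W t \<in> borel_measurable M) \<and>
     (AE \<omega> in M. W 0 \<omega> = 0) \<and>
     (AE \<omega> in M. continuous_on {0..} (\<lambda>t. W t \<omega>)) \<and>
     (\<forall>s t. 0 \<le> s \<and> s < t \<longrightarrow>
        distributed M lborel (\<lambda>\<omega>. W t \<omega> - W s \<omega>) (normal_density 0 (sqrt (t - s)))) \<and>
     (\<forall>(n::nat) (u::nat \<Rightarrow> real). 0 \<le> u 0 \<and> (\<forall>i<n. u i < u (Suc i)) \<longrightarrow>
        prob_space.indep_vars M (\<lambda>_. borel) (\<lambda>i \<omega>. W (u (Suc i)) \<omega> - W (u i) \<omega>) {..<n})"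

definition holder_on :: "real set \<Rightarrow> real \<Rightarrow> (real \<Rightarrow> real) \<Rightarrow> bool" where
  "holder_on S \<tau> f \<longleftrightarrow> (\<exists>C. \<forall>x\<in>S. \<forall>y\<in>S. \<bar>f x - f y\<bar> \<le> C * \<bar>x - y\<bar> powr \<tau>)"

definition bridge :: "(real \<Rightarrow> 'a \<Rightarrow> real) \<Rightarrow> (real \<Rightarrow> real) \<Rightarrow> real \<Rightarrow> 'a \<Rightarrow> real" where
  "bridge W \<kappa> t \<omega> = W t \<omega> - \<kappa> t * W 1 \<omega>"

definition Xproc :: "real \<Rightarrow> nat \<Rightarrow> (real \<Rightarrow> 'a \<Rightarrow> real) \<Rightarrow> (real \<Rightarrow> real) \<Rightarrow> real \<Rightarrow> 'a \<Rightarrow> real" where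
  "Xproc \<alpha> b W \<kappa> t \<omega> = (\<Sum>n. \<alpha> ^ n * bridge W \<kappa> (frac (real b ^ n * t)) \<omega>)"

end

theory Submission
  imports Defs
begin


definition sqi :: "'a measure \<Rightarrow> ('a \<Rightarrow> real) \<Rightarrow> bool" where
  "sqi M f \<longleftrightarrow> f \<in> borel_measurable M \<and> integrable M (\<lambda>x. (f x)\<^sup>2)"

definition ip :: "'a measure \<Rightarrow> ('a \<Rightarrow> real) \<Rightarrow> ('a \<Rightarrow> real) \<Rightarrow> real" where
  "ip M f g = (\<integral>x. f x * g x \<partial>M)"

definition nrm :: "'a measure \<Rightarrow> ('a \<Rightarrow> real) \<Rightarrow> real" where
  "nrm M f = sqrt (ip M f f)"

lemma sqi_meas: "sqi M f \<Longrightarrow> f \<in> borel_measurable M" by (simp add: sqi_def)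

lemma absprod: "\<bar>a * b\<bar> \<le> a\<^sup>2 + b\<^sup>2" for a b :: real
proof -
  have "0 \<le> (\<bar>a\<bar> - \<bar>b\<bar>)\<^sup>2" by simp
  hence "2*(\<bar>a\<bar>*\<bar>b\<bar>) \<le> \<bar>a\<bar>\<^sup>2 + \<bar>b\<bar>\<^sup>2" by (simp add: power2_diff)
  moreover have "0 \<le> \<bar>a\<bar>*\<bar>b\<bar>" by simp
  ultimately have "\<bar>a\<bar>*\<bar>b\<bar> \<le> a\<^sup>2 + b\<^sup>2" using zero_le_power2[of a] zero_le_power2[of b] unfolding power2_abs by linarith
  then show ?thesis by (simp add: abs_mult)
qed

lemma sqi_prod_int:
  assumes "sqi M f" "sqi M g" shows "integrable M (\<lambda>x. f x * g x)"
proof (rule Bochner_Integration.integrable_bound)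
  show "integrable M (\<lambda>x. (f x)\<^sup>2 + (g x)\<^sup>2)" using assms by (simp add: sqi_def)
  show "(\<lambda>x. f x * g x) \<in> borel_measurable M" using assms by (simp add: sqi_def borel_measurable_times)
  show "AE x in M. norm (f x * g x) \<le> norm ((f x)\<^sup>2 + (g x)\<^sup>2)"
  proof (rule AE_I2)
    fix x
    have "\<bar>f x * g x\<bar> \<le> (f x)\<^sup>2 + (g x)\<^sup>2" by (rule absprod)
    then show "norm (f x * g x) \<le> norm ((f x)\<^sup>2 + (g x)\<^sup>2)" by simp
  qed
qed

lemma sqi_add: "sqi M f \<Longrightarrow> sqi M g \<Longrightarrow> sqi M (\<lambda>x. f x + g x)"
proof -
  assume a: "sqi M f" "sqi M g"
  have "integrable M (\<lambda>x. (f x)\<^sup>2 + 2 * (f x * g x) + (g x)\<^sup>2)"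
    using a sqi_prod_int[OF a] by (simp add: sqi_def)
  then show ?thesis using a by (simp add: sqi_def power2_sum borel_measurable_add algebra_simps)
qed

lemma sqi_cmult: "sqi M f \<Longrightarrow> sqi M (\<lambda>x. c * f x)"
  by (simp add: sqi_def power_mult_distrib borel_measurable_times)

lemma sqi_uminus: "sqi M f \<Longrightarrow> sqi M (\<lambda>x. - f x)"
  by (simp add: sqi_def)

lemma sqi_diff: "sqi M f \<Longrightarrow> sqi M g \<Longrightarrow> sqi M (\<lambda>x. f x - g x)"
  using sqi_add[of M f "\<lambda>x. - g x"] sqi_uminus[of M g] by simp

lemma sqi_zero: "sqi M (\<lambda>x. 0)" by (simp add: sqi_def)

lemma sqi_sum: "(\<And>i. i \<in> I \<Longrightarrow> sqi M (f i)) \<Longrightarrow> sqi M (\<lambda>x. \<Sum>i\<in>I. f i x)"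
proof (induction I rule: infinite_finite_induct)
  case (infinite A) then show ?case by (simp add: sqi_zero)
next
  case empty then show ?case by (simp add: sqi_zero)
next
  case (insert a A) then show ?case by (simp add: sqi_add)
qed

lemma sqi_cong_AE:
  assumes "sqi M f" "g \<in> borel_measurable M" "AE x in M. f x = g x" shows "sqi M g"
proof -
  have "AE x in M. (f x)\<^sup>2 = (g x)\<^sup>2" using assms(3) by auto
  then show ?thesis using assms unfolding sqi_def
    using integrable_cong_AE[of "\<lambda>x. (f x)\<^sup>2" M "\<lambda>x. (g x)\<^sup>2"] by auto
qed

lemma ip_cong_AE:
  assumes "f \<in> borel_measurable M" "g \<in> borel_measurable M" "AE x in M. f x = f' x"
    "AE x in M. g x = g' x" "f' \<in> borel_measurable M" "g' \<in> borel_measurable M"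
  shows "ip M f g = ip M f' g'"
  unfolding ip_def using assms by (intro integral_cong_AE) auto

lemma ip_comm: "ip M f g = ip M g f" by (simp add: ip_def mult.commute)

lemma ip_add_left: "sqi M f \<Longrightarrow> sqi M g \<Longrightarrow> sqi M h \<Longrightarrow> ip M (\<lambda>x. f x + g x) h = ip M f h + ip M g h"
  unfolding ip_def distrib_right by (intro Bochner_Integration.integral_add sqi_prod_int)

lemma ip_add_right: "sqi M f \<Longrightarrow> sqi M g \<Longrightarrow> sqi M h \<Longrightarrow> ip M h (\<lambda>x. f x + g x) = ip M h f + ip M h g"
  unfolding ip_def distrib_left by (intro Bochner_Integration.integral_add sqi_prod_int)

lemma ip_diff_left: "sqi M f \<Longrightarrow> sqi M g \<Longrightarrow> sqi M h \<Longrightarrow> ip M (\<lambda>x. f x - g x) h = ip M f h - ip M g h"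
  unfolding ip_def left_diff_distrib by (intro Bochner_Integration.integral_diff sqi_prod_int)

lemma ip_diff_right: "sqi M f \<Longrightarrow> sqi M g \<Longrightarrow> sqi M h \<Longrightarrow> ip M h (\<lambda>x. f x - g x) = ip M h f - ip M h g"
  unfolding ip_def right_diff_distrib by (intro Bochner_Integration.integral_diff sqi_prod_int)

lemma ip_cmult_left: "ip M (\<lambda>x. c * f x) h = c * ip M f h"
  unfolding ip_def by (simp add: mult.assoc)

lemma ip_cmult_right: "ip M h (\<lambda>x. c * f x) = c * ip M h f"
  unfolding ip_def by (simp add: mult.left_commute)

lemma ip_sum_left: "(\<And>i. i \<in> I \<Longrightarrow> sqi M (f i)) \<Longrightarrow> sqi M h \<Longrightarrow> ip M (\<lambda>x. \<Sum>i\<in>I. f i x) h = (\<Sum>i\<in>I. ip M (f i) h)"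
  unfolding ip_def sum_distrib_right by (intro Bochner_Integration.integral_sum sqi_prod_int) auto

lemma ip_sum_right: "(\<And>i. i \<in> I \<Longrightarrow> sqi M (f i)) \<Longrightarrow> sqi M h \<Longrightarrow> ip M h (\<lambda>x. \<Sum>i\<in>I. f i x) = (\<Sum>i\<in>I. ip M h (f i))"
  unfolding ip_def sum_distrib_left by (intro Bochner_Integration.integral_sum sqi_prod_int) auto

lemma ip_self_nonneg: "0 \<le> ip M f f"
  unfolding ip_def by (simp add: integral_nonneg_AE)

lemma nrm_nonneg: "0 \<le> nrm M f" by (simp add: nrm_def ip_self_nonneg)

lemma nrm_sq: "(nrm M f)\<^sup>2 = ip M f f" by (simp add: nrm_def ip_self_nonneg)

lemma quad_CS:
  fixes A B C :: real
  assumes "\<And>r. 0 \<le> A - 2 * r * C + r\<^sup>2 * B" and B: "0 \<le> B" shows "C\<^sup>2 \<le> A * B"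
proof (cases "B = 0")
  case True
  show ?thesis
  proof (rule ccontr)
    assume "\<not> C\<^sup>2 \<le> A * B"
    hence "C \<noteq> 0" using True by auto
    have "0 \<le> A - 2 * ((A+1)/(2*C)) * C" using assms(1)[of "(A+1)/(2*C)"] True by simp
    also have "\<dots> = -1" using \<open>C \<noteq> 0\<close> by (simp add: field_simps)
    finally show False by simp
  qed
next
  case False
  hence "B > 0" using B by simp
  have "0 \<le> A - 2 * (C/B) * C + (C/B)\<^sup>2 * B" by (rule assms)
  also have "\<dots> = A - C\<^sup>2 / B" using \<open>B>0\<close> by (simp add: field_simps power2_eq_square)
  finally show ?thesis using \<open>B>0\<close> by (simp add: field_simps)
qed

lemma CS:
  assumes f: "sqi M f" and g: "sqi M g" shows "\<bar>ip M f g\<bar> \<le> nrm M f * nrm M g"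
proof -
  have "(ip M f g)\<^sup>2 \<le> ip M f f * ip M g g"
  proof (rule quad_CS)
    fix r
    have s: "sqi M (\<lambda>x. r * g x)" using g by (rule sqi_cmult)
    have "0 \<le> ip M (\<lambda>x. f x - r * g x) (\<lambda>x. f x - r * g x)" by (rule ip_self_nonneg)
    also have "\<dots> = ip M f (\<lambda>x. f x - r * g x) - ip M (\<lambda>x. r * g x) (\<lambda>x. f x - r * g x)"
      using f g s by (intro ip_diff_left sqi_diff) auto
    also have "ip M f (\<lambda>x. f x - r * g x) = ip M f f - ip M f (\<lambda>x. r * g x)"
      using f g s by (intro ip_diff_right) auto
    also have "ip M (\<lambda>x. r * g x) (\<lambda>x. f x - r * g x) = ip M (\<lambda>x. r * g x) f - ip M (\<lambda>x. r * g x) (\<lambda>x. r * g x)"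
      using f g s by (intro ip_diff_right) auto
    also have "ip M f (\<lambda>x. r * g x) = r * ip M f g" by (rule ip_cmult_right)
    also have "ip M (\<lambda>x. r * g x) f = r * ip M f g" by (simp add: ip_cmult_left ip_comm[of M g f])
    also have "ip M (\<lambda>x. r * g x) (\<lambda>x. r * g x) = r * (r * ip M g g)" by (simp add: ip_cmult_left ip_cmult_right)
    also have "ip M f f - r * ip M f g - (r * ip M f g - r * (r * ip M g g)) = ip M f f - 2 * r * ip M f g + r\<^sup>2 * ip M g g"
      by (simp add: power2_eq_square algebra_simps)
    finally show "0 \<le> ip M f f - 2 * r * ip M f g + r\<^sup>2 * ip M g g" .
  qed (rule ip_self_nonneg)
  then have "\<bar>ip M f g\<bar> \<le> sqrt (ip M f f * ip M g g)"
    by (intro real_le_rsqrt) (simp add: power2_abs)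
  then show ?thesis by (simp add: nrm_def real_sqrt_mult)
qed

lemma nrm_triangle:
  assumes f: "sqi M f" and g: "sqi M g" shows "nrm M (\<lambda>x. f x + g x) \<le> nrm M f + nrm M g"
proof -
  have "(nrm M (\<lambda>x. f x + g x))\<^sup>2 = ip M f f + 2 * ip M f g + ip M g g"
    using f g by (simp add: nrm_sq ip_add_left ip_add_right sqi_add ip_comm[of M g f])
  also have "\<dots> \<le> (nrm M f)\<^sup>2 + 2 * (nrm M f * nrm M g) + (nrm M g)\<^sup>2"
    using CS[OF f g] by (simp add: nrm_sq)
  also have "\<dots> = (nrm M f + nrm M g)\<^sup>2" by (simp add: power2_sum)
  finally show ?thesis using nrm_nonneg[of M f] nrm_nonneg[of M g]
    by (meson add_nonneg_nonneg power2_le_imp_le)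
qed

lemma nrm_cmult: "nrm M (\<lambda>x. c * f x) = \<bar>c\<bar> * nrm M f"
  by (simp add: nrm_def ip_cmult_left ip_cmult_right real_sqrt_mult power2_eq_square[symmetric] mult.assoc[symmetric])

lemma nrm_uminus: "nrm M (\<lambda>x. - f x) = nrm M f"
  using nrm_cmult[of M "-1" f] by simp

lemma nrm_triangle_diff:
  assumes f: "sqi M f" and g: "sqi M g" shows "nrm M (\<lambda>x. f x - g x) \<le> nrm M f + nrm M g"
  using nrm_triangle[OF f sqi_uminus[OF g]] nrm_uminus[of M g] by simp

lemma nrm_sum:
  "(\<And>i. i \<in> I \<Longrightarrow> sqi M (f i)) \<Longrightarrow> nrm M (\<lambda>x. \<Sum>i\<in>I. f i x) \<le> (\<Sum>i\<in>I. nrm M (f i))"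
proof (induction I rule: infinite_finite_induct)
  case (infinite A) then show ?case by (simp add: nrm_def ip_def)
next
  case empty then show ?case by (simp add: nrm_def ip_def)
next
  case (insert a A)
  have "nrm M (\<lambda>x. \<Sum>i\<in>insert a A. f i x) = nrm M (\<lambda>x. f a x + (\<Sum>i\<in>A. f i x))"
    using insert by simp
  also have "\<dots> \<le> nrm M (f a) + nrm M (\<lambda>x. \<Sum>i\<in>A. f i x)"
    using insert by (intro nrm_triangle) (auto intro: sqi_sum)
  also have "\<dots> \<le> nrm M (f a) + (\<Sum>i\<in>A. nrm M (f i))" using insert by simp
  finally show ?case using insert by simp
qed

lemma nrm_cong_AE:
  assumes "f \<in> borel_measurable M" "g \<in> borel_measurable M" "AE x in M. f x = g x"
  shows "nrm M f = nrm M g"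
  unfolding nrm_def using ip_cong_AE[OF assms(1,1) assms(3,3) assms(2,2)] by simp

lemma sqi_suminf:
  fixes f :: "nat \<Rightarrow> 'a \<Rightarrow> real"
  assumes sq: "\<And>n. sqi M (f n)" and bd: "\<And>n. nrm M (f n) \<le> c n" and sc: "summable c"
    and ae: "AE x in M. summable (\<lambda>n. f n x)"
  shows "sqi M (\<lambda>x. \<Sum>n. f n x) \<and> nrm M (\<lambda>x. \<Sum>n. f n x) \<le> (\<Sum>n. c n)"
proof -
  define F where "F x = (\<Sum>n. f n x)" for x
  define S where "S K x = (\<Sum>n<K. f n x)" for K x
  define C where "C = (\<Sum>n. c n)"
  have fm[measurable]: "\<And>n. f n \<in> borel_measurable M" using sq sqi_meas by blast
  have Fm[measurable]: "F \<in> borel_measurable M" unfolding F_def by measurable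
  have Sm[measurable]: "\<And>K. S K \<in> borel_measurable M" unfolding S_def by measurable
  have c0: "\<And>n. 0 \<le> c n" using bd nrm_nonneg order_trans by blast
  have C0: "0 \<le> C" unfolding C_def using c0 sc suminf_nonneg by blast
  have Ssq: "\<And>K. sqi M (S K)" unfolding S_def using sq by (intro sqi_sum) auto
  have bound: "(\<integral>x. (S K x)\<^sup>2 \<partial>M) \<le> C\<^sup>2" for K
  proof -
    have "nrm M (S K) \<le> (\<Sum>n<K. nrm M (f n))" unfolding S_def using sq by (intro nrm_sum) auto
    also have "\<dots> \<le> (\<Sum>n<K. c n)" using bd by (intro sum_mono) auto
    also have "\<dots> \<le> C" unfolding C_def using sc c0 by (intro sum_le_suminf) auto
    finally have "(nrm M (S K))\<^sup>2 \<le> C\<^sup>2" using nrm_nonneg by (intro power_mono) auto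
    then show ?thesis unfolding nrm_sq ip_def by (simp add: power2_eq_square)
  qed
  have nn: "(\<integral>\<^sup>+ x. ennreal ((S K x)\<^sup>2) \<partial>M) = ennreal (\<integral>x. (S K x)\<^sup>2 \<partial>M)" for K
    using Ssq[of K] unfolding sqi_def by (intro nn_integral_eq_integral) auto
  have conv: "AE x in M. liminf (\<lambda>K. ennreal ((S K x)\<^sup>2)) = ennreal ((F x)\<^sup>2)"
    using ae
  proof eventually_elim
    case (elim x)
    have "(\<lambda>K. S K x) \<longlonglongrightarrow> F x" unfolding S_def F_def using summable_LIMSEQ[OF elim] .
    then have "(\<lambda>K. ennreal ((S K x)\<^sup>2)) \<longlonglongrightarrow> ennreal ((F x)\<^sup>2)"
      by (intro tendsto_ennrealI tendsto_power)
    then show ?case by (intro lim_imp_Liminf) auto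
  qed
  have "(\<integral>\<^sup>+ x. ennreal ((F x)\<^sup>2) \<partial>M) = (\<integral>\<^sup>+ x. liminf (\<lambda>K. ennreal ((S K x)\<^sup>2)) \<partial>M)"
    using conv by (intro nn_integral_cong_AE) auto
  also have "\<dots> \<le> liminf (\<lambda>K. \<integral>\<^sup>+ x. ennreal ((S K x)\<^sup>2) \<partial>M)"
    by (intro nn_integral_liminf) measurable
  also have "\<dots> = liminf (\<lambda>K. ennreal (\<integral>x. (S K x)\<^sup>2 \<partial>M))" by (simp add: nn)
  also have "\<dots> \<le> limsup (\<lambda>K. ennreal (\<integral>x. (S K x)\<^sup>2 \<partial>M))" by (intro Liminf_le_Limsup) auto
  also have "\<dots> \<le> ennreal (C\<^sup>2)" using bound by (intro Limsup_bounded always_eventually) (auto intro: ennreal_leI)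
  finally have le: "(\<integral>\<^sup>+ x. ennreal ((F x)\<^sup>2) \<partial>M) \<le> ennreal (C\<^sup>2)" .
  have int: "integrable M (\<lambda>x. (F x)\<^sup>2)"
  proof (rule integrableI_nonneg)
    show "(\<integral>\<^sup>+ x. ennreal ((F x)\<^sup>2) \<partial>M) < \<infinity>" using le by (rule le_less_trans) simp
  qed auto
  have "ennreal (\<integral>x. (F x)\<^sup>2 \<partial>M) \<le> ennreal (C\<^sup>2)"
    using le nn_integral_eq_integral[OF int] by simp
  then have "(\<integral>x. (F x)\<^sup>2 \<partial>M) \<le> C\<^sup>2" by (simp add: ennreal_le_iff)
  moreover have "ip M F F = (\<integral>x. (F x)\<^sup>2 \<partial>M)" by (simp add: ip_def power2_eq_square)
  ultimately have "nrm M F \<le> sqrt (C\<^sup>2)" unfolding nrm_def by (simp only: real_sqrt_le_iff)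
  then have "nrm M F \<le> C" using C0 by simp
  then show ?thesis using int unfolding F_def C_def sqi_def by (auto simp: Fm[unfolded F_def])
qed



locale bm =
  fixes M :: "'a measure" and W :: "real \<Rightarrow> 'a \<Rightarrow> real"
  assumes BM: "std_brownian_motion M W"
begin

lemma ps: "prob_space M" using BM by (simp add: std_brownian_motion_def)

lemma Wm[measurable]: "W t \<in> borel_measurable M" using BM by (simp add: std_brownian_motion_def)

lemma W0: "AE \<omega> in M. W 0 \<omega> = 0" using BM by (simp add: std_brownian_motion_def)

lemma Wcont: "AE \<omega> in M. continuous_on {0..} (\<lambda>t. W t \<omega>)" using BM by (simp add: std_brownian_motion_def)

lemma Wdist: "0 \<le> s \<Longrightarrow> s < t \<Longrightarrow>
    distributed M lborel (\<lambda>\<omega>. W t \<omega> - W s \<omega>) (normal_density 0 (sqrt (t - s)))"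
  using BM by (simp add: std_brownian_motion_def)

lemma Windep: "0 \<le> u 0 \<Longrightarrow> (\<forall>i<n. u i < u (Suc i)) \<Longrightarrow>
        prob_space.indep_vars M (\<lambda>_. borel) (\<lambda>i \<omega>. W (u (Suc i)) \<omega> - W (u i) \<omega>) {..<n}"
  using BM unfolding std_brownian_motion_def by blast

lemma incr:
  assumes "0 \<le> s" "s < t"
  shows "integrable M (\<lambda>\<omega>. W t \<omega> - W s \<omega>)" "(\<integral>\<omega>. W t \<omega> - W s \<omega> \<partial>M) = 0"
    "integrable M (\<lambda>\<omega>. (W t \<omega> - W s \<omega>)\<^sup>2)" "(\<integral>\<omega>. (W t \<omega> - W s \<omega>)\<^sup>2 \<partial>M) = t - s"
proof -
  interpret prob_space M by (rule ps)
  note D = Wdist[OF assms]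
  have sp: "0 < sqrt (t - s)" using assms by simp
  have "integrable lborel (\<lambda>x. normal_density 0 (sqrt (t - s)) x * x)"
    using sp by (rule integrable_normal_moment_nz_1)
  then show i1: "integrable M (\<lambda>\<omega>. W t \<omega> - W s \<omega>)"
    using distributed_integrable[OF D, of "\<lambda>x. x"] by simp
  show e1: "(\<integral>\<omega>. W t \<omega> - W s \<omega> \<partial>M) = 0"
    using normal_distributed_expectation[OF sp D] .
  have "integrable lborel (\<lambda>x. normal_density 0 (sqrt (t - s)) x * x\<^sup>2)"
    using integrable_normal_moment[where k=2 and \<mu>=0 and \<sigma>="sqrt (t-s)"] sp by simp
  then show "integrable M (\<lambda>\<omega>. (W t \<omega> - W s \<omega>)\<^sup>2)"
    using distributed_integrable[OF D, of "\<lambda>x. x\<^sup>2"] by simp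
  show "(\<integral>\<omega>. (W t \<omega> - W s \<omega>)\<^sup>2 \<partial>M) = t - s"
    using normal_distributed_variance[OF sp D] e1 assms by simp
qed

lemma sqi_incr: "0 \<le> s \<Longrightarrow> s < t \<Longrightarrow> sqi M (\<lambda>\<omega>. W t \<omega> - W s \<omega>)"
  using incr(3) by (simp add: sqi_def)

lemma sqi_W: assumes "0 \<le> t" shows "sqi M (W t)"
proof (cases "t = 0")
  case True
  show ?thesis using True W0 by (intro sqi_cong_AE[OF sqi_zero]) auto
next
  case False
  then have "0 < t" using assms by simp
  show ?thesis
    using W0 by (intro sqi_cong_AE[OF sqi_incr[of 0 t]]) (auto simp: \<open>0<t\<close>)
qed

lemma ip_W0: "g \<in> borel_measurable M \<Longrightarrow> ip M (W 0) g = 0"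
proof -
  assume "g \<in> borel_measurable M"
  have "ip M (W 0) g = ip M (\<lambda>x. 0) g"
    using W0 \<open>g \<in> borel_measurable M\<close> by (intro ip_cong_AE) auto
  then show ?thesis by (simp add: ip_def)
qed

lemma ip_WW_same: assumes "0 \<le> u" shows "ip M (W u) (W u) = u"
proof (cases "u = 0")
  case True then show ?thesis using ip_W0 by simp
next
  case False
  then have "0 < u" using assms by simp
  have "ip M (W u) (W u) = ip M (\<lambda>\<omega>. W u \<omega> - W 0 \<omega>) (\<lambda>\<omega>. W u \<omega> - W 0 \<omega>)"
    using W0 by (intro ip_cong_AE) auto
  also have "\<dots> = u" using incr(4)[of 0 u] \<open>0<u\<close> by (simp add: ip_def power2_eq_square)
  finally show ?thesis .
qed

lemma ip_WW_lt: assumes "0 < u" "u < v" shows "ip M (W u) (W v) = u"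
proof -
  interpret prob_space M by (rule ps)
  define U :: "nat \<Rightarrow> real" where "U i = (if i = 0 then 0 else if i = 1 then u else v)" for i
  have ind: "indep_vars (\<lambda>_. borel) (\<lambda>i \<omega>. W (U (Suc i)) \<omega> - W (U i) \<omega>) {..<2}"
    using Windep[of U 2] assms by (auto simp: U_def less_2_cases_iff)
  have "(\<integral>\<omega>. (\<Prod>i\<in>{..<2::nat}. W (U (Suc i)) \<omega> - W (U i) \<omega>) \<partial>M) =
        (\<Prod>i\<in>{..<2::nat}. \<integral>\<omega>. W (U (Suc i)) \<omega> - W (U i) \<omega> \<partial>M)"
    using assms by (intro indep_vars_lebesgue_integral ind) (auto simp: U_def less_2_cases_iff intro: incr(1))
  also have "\<dots> = 0" using assms by (simp add: numeral_2_eq_2 U_def incr(2))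
  finally have z: "(\<integral>\<omega>. (W u \<omega> - W 0 \<omega>) * (W v \<omega> - W u \<omega>) \<partial>M) = 0"
    by (simp add: numeral_2_eq_2 U_def)
  have "ip M (W u) (\<lambda>\<omega>. W v \<omega> - W u \<omega>) = ip M (\<lambda>\<omega>. W u \<omega> - W 0 \<omega>) (\<lambda>\<omega>. W v \<omega> - W u \<omega>)"
    using W0 by (intro ip_cong_AE) auto
  also have "\<dots> = 0" using z by (simp add: ip_def)
  finally have z2: "ip M (W u) (\<lambda>\<omega>. W v \<omega> - W u \<omega>) = 0" .
  have "ip M (W u) (W v) = ip M (W u) (\<lambda>\<omega>. W u \<omega> + (W v \<omega> - W u \<omega>))" by simp
  also have "\<dots> = ip M (W u) (W u) + ip M (W u) (\<lambda>\<omega>. W v \<omega> - W u \<omega>)"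
    using assms by (intro ip_add_right sqi_W sqi_incr) auto
  finally show ?thesis using z2 ip_WW_same assms by simp
qed

lemma cov: assumes "0 \<le> u" "0 \<le> v" shows "ip M (W u) (W v) = min u v"
proof -
  consider "u = 0" | "v = 0" | "0 < u" "u = v" | "0 < u" "u < v" | "0 < v" "v < u"
    using assms by linarith
  then show ?thesis
  proof cases
    case 1 then show ?thesis using ip_W0 assms by simp
  next
    case 2 then show ?thesis using ip_W0[of "W u"] ip_comm[of M "W u" "W 0"] assms by simp
  next
    case 3 then show ?thesis using ip_WW_same by simp
  next
    case 4 then show ?thesis using ip_WW_lt by simp
  next
    case 5 then show ?thesis using ip_WW_lt ip_comm[of M "W u" "W v"] by simp
  qed
qed

end


lemma frac_arc:
  fixes A A' :: real
  assumes "0 \<le> A - A'" "A - A' < 1"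
  shows "(frac A' \<le> frac A \<and> frac A - frac A' = A - A') \<or> (frac A < frac A' \<and> frac A + 1 - frac A' = A - A')"
proof -
  define k where "k = \<lfloor>A\<rfloor> - \<lfloor>A'\<rfloor>"
  have e: "frac A - frac A' = (A - A') - of_int k" unfolding frac_def k_def by simp
  have "frac A - frac A' < 1" "frac A - frac A' > -1"
    using frac_lt_1[of A] frac_ge_0[of A'] frac_lt_1[of A'] frac_ge_0[of A] by linarith+
  then have "of_int k > (-1::real)" "of_int k < (2::real)" using e assms by linarith+
  then have "k = 0 \<or> k = 1" by linarith
  then show ?thesis
  proof
    assume "k = 0" then show ?thesis using e assms by simp
  next
    assume "k = 1" then show ?thesis using e assms by simp
  qed
qed

definition ov :: "real \<Rightarrow> real \<Rightarrow> real \<Rightarrow> real \<Rightarrow> real" where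
  "ov p q p' q' = min p p' - min p q' - min q p' + min q q'"

lemma ov_nonneg: "q \<le> p \<Longrightarrow> q' \<le> p' \<Longrightarrow> 0 \<le> ov p q p' q'"
  unfolding ov_def by (auto simp: min_def)

definition P1 :: "real \<Rightarrow> real \<Rightarrow> real" where "P1 x y = x"
definition Q1 :: "real \<Rightarrow> real \<Rightarrow> real" where "Q1 x y = (if y \<le> x then y else 0)"
definition P2 :: "real \<Rightarrow> real \<Rightarrow> real" where "P2 x y = (if y \<le> x then 0 else 1)"
definition Q2 :: "real \<Rightarrow> real \<Rightarrow> real" where "Q2 x y = (if y \<le> x then 0 else y)"

lemma PQ_range:
  assumes "x \<in> {0..1}" "y \<in> {0..1}"
  shows "P1 x y \<in> {0..1}" "Q1 x y \<in> {0..1}" "P2 x y \<in> {0..1}" "Q2 x y \<in> {0..1}"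
    "Q1 x y \<le> P1 x y" "Q2 x y \<le> P2 x y"
  using assms by (auto simp: P1_def Q1_def P2_def Q2_def)

context bm
begin

definition IW :: "real \<Rightarrow> real \<Rightarrow> 'a \<Rightarrow> real" where
  "IW p q \<omega> = W p \<omega> - W q \<omega>"

definition wf :: "real \<Rightarrow> real \<Rightarrow> 'a \<Rightarrow> real" where
  "wf x y \<omega> = IW (P1 x y) (Q1 x y) \<omega> + IW (P2 x y) (Q2 x y) \<omega>"

lemma IW_sqi: "0 \<le> p \<Longrightarrow> 0 \<le> q \<Longrightarrow> sqi M (IW p q)"
  unfolding IW_def by (intro sqi_diff sqi_W)

lemma ip_IW:
  assumes "0 \<le> p" "0 \<le> q" "0 \<le> p'" "0 \<le> q'"
  shows "ip M (IW p q) (IW p' q') = ov p q p' q'"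
proof -
  have "ip M (IW p q) (IW p' q') = ip M (W p) (IW p' q') - ip M (W q) (IW p' q')"
    unfolding IW_def[of p q] using assms by (intro ip_diff_left sqi_W IW_sqi) auto
  also have "ip M (W p) (IW p' q') = ip M (W p) (W p') - ip M (W p) (W q')"
    unfolding IW_def using assms by (intro ip_diff_right sqi_W) auto
  also have "ip M (W q) (IW p' q') = ip M (W q) (W p') - ip M (W q) (W q')"
    unfolding IW_def using assms by (intro ip_diff_right sqi_W) auto
  finally show ?thesis using assms by (simp add: cov ov_def)
qed

lemma wf_sqi: "x \<in> {0..1} \<Longrightarrow> y \<in> {0..1} \<Longrightarrow> sqi M (wf x y)"
  unfolding wf_def using PQ_range[of x y] by (intro sqi_add IW_sqi) auto

lemma wf_meas[measurable]: "wf x y \<in> borel_measurable M"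
  unfolding wf_def IW_def by measurable

lemma ip_wf_nonneg:
  assumes "x \<in> {0..1}" "y \<in> {0..1}" "x' \<in> {0..1}" "y' \<in> {0..1}"
  shows "0 \<le> ip M (wf x y) (wf x' y')"
proof -
  note r = PQ_range[OF assms(1,2)] PQ_range[OF assms(3,4)]
  have s: "sqi M (IW (P1 x y) (Q1 x y))" "sqi M (IW (P2 x y) (Q2 x y))"
    "sqi M (IW (P1 x' y') (Q1 x' y'))" "sqi M (IW (P2 x' y') (Q2 x' y'))"
    using r by (auto intro!: IW_sqi)
  have "ip M (wf x y) (wf x' y') =
     ip M (IW (P1 x y) (Q1 x y)) (wf x' y') + ip M (IW (P2 x y) (Q2 x y)) (wf x' y')"
    unfolding wf_def[of x y] using s assms by (intro ip_add_left wf_sqi) auto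
  also have "ip M (IW (P1 x y) (Q1 x y)) (wf x' y') =
     ip M (IW (P1 x y) (Q1 x y)) (IW (P1 x' y') (Q1 x' y')) + ip M (IW (P1 x y) (Q1 x y)) (IW (P2 x' y') (Q2 x' y'))"
    unfolding wf_def[of x' y'] using s by (intro ip_add_right) auto
  also have "ip M (IW (P2 x y) (Q2 x y)) (wf x' y') =
     ip M (IW (P2 x y) (Q2 x y)) (IW (P1 x' y') (Q1 x' y')) + ip M (IW (P2 x y) (Q2 x y)) (IW (P2 x' y') (Q2 x' y'))"
    unfolding wf_def[of x' y'] using s by (intro ip_add_right) auto
  finally show ?thesis using r by (simp add: ip_IW ov_nonneg add_nonneg_nonneg)
qed

lemma ip_wf_self:
  assumes "x \<in> {0..1}" "y \<in> {0..1}"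
    and arc: "(y \<le> x \<and> x - y = d) \<or> (x < y \<and> x + 1 - y = d)"
  shows "ip M (wf x y) (wf x y) = d"
proof -
  note r = PQ_range[OF assms(1,2)]
  have s: "sqi M (IW (P1 x y) (Q1 x y))" "sqi M (IW (P2 x y) (Q2 x y))"
    using r by (auto intro!: IW_sqi)
  have "ip M (wf x y) (wf x y) =
     ip M (IW (P1 x y) (Q1 x y)) (wf x y) + ip M (IW (P2 x y) (Q2 x y)) (wf x y)"
    unfolding wf_def[of x y] using s assms(1,2) by (intro ip_add_left sqi_add) auto
  also have "ip M (IW (P1 x y) (Q1 x y)) (wf x y) =
     ip M (IW (P1 x y) (Q1 x y)) (IW (P1 x y) (Q1 x y)) + ip M (IW (P1 x y) (Q1 x y)) (IW (P2 x y) (Q2 x y))"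
    unfolding wf_def[of x y] using s by (intro ip_add_right) auto
  also have "ip M (IW (P2 x y) (Q2 x y)) (wf x y) =
     ip M (IW (P2 x y) (Q2 x y)) (IW (P1 x y) (Q1 x y)) + ip M (IW (P2 x y) (Q2 x y)) (IW (P2 x y) (Q2 x y))"
    unfolding wf_def[of x y] using s by (intro ip_add_right) auto
  finally have e: "ip M (wf x y) (wf x y) = ov (P1 x y) (Q1 x y) (P1 x y) (Q1 x y) + ov (P1 x y) (Q1 x y) (P2 x y) (Q2 x y)
     + (ov (P2 x y) (Q2 x y) (P1 x y) (Q1 x y) + ov (P2 x y) (Q2 x y) (P2 x y) (Q2 x y))"
    using r by (simp add: ip_IW)
  show ?thesis using arc assms unfolding e
    by (auto simp: ov_def P1_def Q1_def P2_def Q2_def min_def)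
qed

end

locale stp = bm +
  fixes \<kappa> :: "real \<Rightarrow> real" and \<alpha> :: real and b :: nat and C \<sigma> :: real
  assumes kr: "\<forall>x\<in>{0..1}. \<kappa> x \<in> {0..1}" and k0: "\<kappa> 0 = 0" and k1: "\<kappa> 1 = 1"
    and alpha: "0 < \<alpha>" "\<alpha> < 1" and bge: "2 \<le> b" and ab: "\<alpha>\<^sup>2 * real b < 1"
    and hold: "\<forall>x\<in>{0..1}. \<forall>y\<in>{0..1}. \<bar>\<kappa> x - \<kappa> y\<bar> \<le> C * \<bar>x - y\<bar> powr \<sigma>"
    and Cpos: "0 < C" and sig: "1/2 < \<sigma>" and asig: "\<alpha> * real b powr \<sigma> < 1"
begin

lemma bridge_eq: "bridge W \<kappa> u = (\<lambda>\<omega>. W u \<omega> - \<kappa> u * W 1 \<omega>)"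
  by (simp add: fun_eq_iff bridge_def)

lemma bridge_meas[measurable]: "bridge W \<kappa> u \<in> borel_measurable M"
  unfolding bridge_eq by measurable

lemma B_sqi: "u \<in> {0..1} \<Longrightarrow> sqi M (bridge W \<kappa> u)"
  unfolding bridge_eq by (intro sqi_diff sqi_cmult sqi_W) auto

lemma nrm_W: "0 \<le> u \<Longrightarrow> nrm M (W u) = sqrt u"
  by (simp add: nrm_def ip_WW_same)

lemma nrm_B: assumes "u \<in> {0..1}" shows "nrm M (bridge W \<kappa> u) \<le> 2"
proof -
  have "nrm M (bridge W \<kappa> u) \<le> nrm M (W u) + nrm M (\<lambda>\<omega>. \<kappa> u * W 1 \<omega>)"
    unfolding bridge_eq using assms by (intro nrm_triangle_diff sqi_W sqi_cmult) auto
  also have "\<dots> = sqrt u + \<bar>\<kappa> u\<bar>" using assms by (simp add: nrm_cmult nrm_W)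
  also have "\<dots> \<le> 2"
  proof -
    have "sqrt u \<le> 1" using assms by simp
    moreover have "\<bar>\<kappa> u\<bar> \<le> 1" using assms kr by auto
    ultimately show ?thesis by linarith
  qed
  finally show ?thesis .
qed

lemma d_sqi: "x \<in> {0..1} \<Longrightarrow> y \<in> {0..1} \<Longrightarrow> sqi M (\<lambda>\<omega>. bridge W \<kappa> x \<omega> - bridge W \<kappa> y \<omega>)"
  by (intro sqi_diff B_sqi)

lemma nrm_d4: "x \<in> {0..1} \<Longrightarrow> y \<in> {0..1} \<Longrightarrow> nrm M (\<lambda>\<omega>. bridge W \<kappa> x \<omega> - bridge W \<kappa> y \<omega>) \<le> 4"
  using nrm_triangle_diff[OF B_sqi B_sqi, of x y] nrm_B[of x] nrm_B[of y] by simp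

lemma nrm_c:
  assumes x: "x \<in> {0..1}" and y: "y \<in> {0..1}" and d: "0 \<le> d"
    and arc: "(y \<le> x \<and> x - y = d) \<or> (x < y \<and> x + 1 - y = d)"
  shows "nrm M (\<lambda>\<omega>. wf x y \<omega> - (bridge W \<kappa> x \<omega> - bridge W \<kappa> y \<omega>)) \<le> 2 * C * d powr \<sigma>"
  using arc
proof
  assume a: "y \<le> x \<and> x - y = d"
  have e: "(\<lambda>\<omega>. wf x y \<omega> - (bridge W \<kappa> x \<omega> - bridge W \<kappa> y \<omega>)) = (\<lambda>\<omega>. (\<kappa> x - \<kappa> y) * W 1 \<omega>)"
    using a by (simp add: fun_eq_iff wf_def IW_def P1_def Q1_def P2_def Q2_def bridge_def algebra_simps)
  have "\<bar>\<kappa> x - \<kappa> y\<bar> \<le> C * \<bar>x - y\<bar> powr \<sigma>" using hold x y by auto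
  also have "\<dots> = C * d powr \<sigma>" using a by simp
  also have "\<dots> \<le> 2 * C * d powr \<sigma>" using Cpos by simp
  finally show ?thesis unfolding e by (simp add: nrm_cmult nrm_W)
next
  assume a: "x < y \<and> x + 1 - y = d"
  have e: "(\<lambda>\<omega>. wf x y \<omega> - (bridge W \<kappa> x \<omega> - bridge W \<kappa> y \<omega>)) = (\<lambda>\<omega>. (1 + \<kappa> x - \<kappa> y) * W 1 \<omega> - W 0 \<omega>)"
    using a by (simp add: fun_eq_iff wf_def IW_def P1_def Q1_def P2_def Q2_def bridge_def algebra_simps)
  have "nrm M (\<lambda>\<omega>. (1 + \<kappa> x - \<kappa> y) * W 1 \<omega> - W 0 \<omega>) \<le> nrm M (\<lambda>\<omega>. (1 + \<kappa> x - \<kappa> y) * W 1 \<omega>) + nrm M (W 0)"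
    by (intro nrm_triangle_diff sqi_cmult sqi_W) auto
  also have "\<dots> = \<bar>1 + \<kappa> x - \<kappa> y\<bar>" by (simp add: nrm_cmult nrm_W)
  also have "\<bar>1 + \<kappa> x - \<kappa> y\<bar> \<le> \<bar>\<kappa> x - \<kappa> 0\<bar> + \<bar>\<kappa> 1 - \<kappa> y\<bar>" using k0 k1 by simp
  also have "\<bar>\<kappa> x - \<kappa> 0\<bar> \<le> C * \<bar>x - 0\<bar> powr \<sigma>" using hold[rule_format, of x 0] x by simp
  also have "\<bar>\<kappa> 1 - \<kappa> y\<bar> \<le> C * \<bar>1 - y\<bar> powr \<sigma>" using hold[rule_format, of 1 y] y by simp
  also have "C * \<bar>x - 0\<bar> powr \<sigma> \<le> C * d powr \<sigma>"
    using a x y Cpos sig by (intro mult_left_mono powr_mono2) auto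
  also have "C * \<bar>1 - y\<bar> powr \<sigma> \<le> C * d powr \<sigma>"
    using a x y Cpos sig by (intro mult_left_mono powr_mono2) auto
  finally show ?thesis unfolding e by simp
qed

lemma nrm_d_small:
  assumes x: "x \<in> {0..1}" and y: "y \<in> {0..1}" and d: "0 \<le> d" "d \<le> 1"
    and arc: "(y \<le> x \<and> x - y = d) \<or> (x < y \<and> x + 1 - y = d)"
  shows "nrm M (\<lambda>\<omega>. bridge W \<kappa> x \<omega> - bridge W \<kappa> y \<omega>) \<le> (1 + 2 * C) * sqrt d"
proof -
  have sw: "sqi M (wf x y)" using x y by (rule wf_sqi)
  have sc: "sqi M (\<lambda>\<omega>. wf x y \<omega> - (bridge W \<kappa> x \<omega> - bridge W \<kappa> y \<omega>))"
    using x y by (intro sqi_diff wf_sqi d_sqi)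
  have "nrm M (\<lambda>\<omega>. bridge W \<kappa> x \<omega> - bridge W \<kappa> y \<omega>) =
        nrm M (\<lambda>\<omega>. wf x y \<omega> - (wf x y \<omega> - (bridge W \<kappa> x \<omega> - bridge W \<kappa> y \<omega>)))" by simp
  also have "\<dots> \<le> nrm M (wf x y) + nrm M (\<lambda>\<omega>. wf x y \<omega> - (bridge W \<kappa> x \<omega> - bridge W \<kappa> y \<omega>))"
    using nrm_triangle_diff[OF sw sc] .
  also have "nrm M (wf x y) = sqrt d" using ip_wf_self[OF x y arc] by (simp add: nrm_def)
  also have "nrm M (\<lambda>\<omega>. wf x y \<omega> - (bridge W \<kappa> x \<omega> - bridge W \<kappa> y \<omega>)) \<le> 2 * C * d powr \<sigma>"
    by (rule nrm_c[OF x y d(1) arc])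
  also have "d powr \<sigma> \<le> d powr (1/2)" using d sig by (intro powr_mono') auto
  also have "d powr (1/2) = sqrt d" using d by (simp add: powr_half_sqrt)
  finally show ?thesis using Cpos by (simp add: algebra_simps)
qed


lemma frac01: "frac u \<in> {0..1}" for u :: real
  using frac_lt_1[of u] by auto

lemma AE_bounded: "AE \<omega> in M. \<exists>K. \<forall>u\<in>{0..1}. \<bar>bridge W \<kappa> u \<omega>\<bar> \<le> K"
  using Wcont
proof eventually_elim
  case (elim \<omega>)
  have "continuous_on {0..1} (\<lambda>t. W t \<omega>)" using elim by (rule continuous_on_subset) auto
  then have "compact ((\<lambda>t. W t \<omega>) ` {0..1})" by (intro compact_continuous_image) auto
  then obtain K where K: "\<forall>x\<in>(\<lambda>t. W t \<omega>) ` {0..1}. norm x \<le> K"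
    using compact_imp_bounded bounded_iff by metis
  have "\<bar>bridge W \<kappa> u \<omega>\<bar> \<le> K + K" if u: "u \<in> {0..1}" for u
  proof -
    have a: "\<bar>W u \<omega>\<bar> \<le> K" "\<bar>W 1 \<omega>\<bar> \<le> K" using K u by auto
    have "\<bar>\<kappa> u\<bar> \<le> 1" using kr u by auto
    then have "\<bar>\<kappa> u * W 1 \<omega>\<bar> \<le> 1 * K" unfolding abs_mult using a by (intro mult_mono) auto
    then show ?thesis unfolding bridge_def using a by linarith
  qed
  then show ?case by blast
qed

lemma AE_summable: "AE \<omega> in M. \<forall>u. summable (\<lambda>n. \<alpha>^n * bridge W \<kappa> (frac (real b ^ n * u)) \<omega>)"
  using AE_bounded
proof eventually_elim
  case (elim \<omega>)
  then obtain K where K: "\<forall>u\<in>{0..1}. \<bar>bridge W \<kappa> u \<omega>\<bar> \<le> K" by blast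
  show ?case
  proof
    fix u
    show "summable (\<lambda>n. \<alpha>^n * bridge W \<kappa> (frac (real b ^ n * u)) \<omega>)"
    proof (rule summable_comparison_test)
      show "summable (\<lambda>n. \<alpha>^n * K)" using alpha by (intro summable_mult2 summable_geometric) auto
      show "\<exists>N. \<forall>n\<ge>N. norm (\<alpha>^n * bridge W \<kappa> (frac (real b ^ n * u)) \<omega>) \<le> \<alpha>^n * K"
        using K frac01 alpha by (auto simp: abs_mult intro!: mult_left_mono)
    qed
  qed
qed

definition dd :: "real \<Rightarrow> real \<Rightarrow> nat \<Rightarrow> 'a \<Rightarrow> real" where
  "dd t s n \<omega> = bridge W \<kappa> (frac (real b ^ n * t)) \<omega> - bridge W \<kappa> (frac (real b ^ n * s)) \<omega>"

lemma dd_meas[measurable]: "dd t s n \<in> borel_measurable M"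
  unfolding dd_def[abs_def] by measurable

lemma dd_sqi: "sqi M (dd t s n)"
  unfolding dd_def[abs_def] using frac01 by (intro d_sqi) auto

lemma nrm_dd4: "nrm M (dd t s n) \<le> 4"
  unfolding dd_def[abs_def] using frac01 by (intro nrm_d4) auto

lemma AE_Xdiff: "AE \<omega> in M. summable (\<lambda>n. \<alpha>^n * dd t s n \<omega>) \<and>
    Xproc \<alpha> b W \<kappa> t \<omega> - Xproc \<alpha> b W \<kappa> s \<omega> = (\<Sum>n. \<alpha>^n * dd t s n \<omega>)"
  using AE_summable
proof eventually_elim
  case (elim \<omega>)
  have e: "(\<lambda>n. \<alpha>^n * dd t s n \<omega>) = (\<lambda>n. \<alpha>^n * bridge W \<kappa> (frac (real b ^ n * t)) \<omega> - \<alpha>^n * bridge W \<kappa> (frac (real b ^ n * s)) \<omega>)"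
    by (simp add: fun_eq_iff dd_def right_diff_distrib)
  have s1: "summable (\<lambda>n. \<alpha>^n * bridge W \<kappa> (frac (real b ^ n * t)) \<omega>)"
    and s2: "summable (\<lambda>n. \<alpha>^n * bridge W \<kappa> (frac (real b ^ n * s)) \<omega>)" using elim by auto
  show ?case unfolding e Xproc_def using suminf_diff[OF s1 s2] summable_diff[OF s1 s2] by simp
qed

lemma arc_n:
  assumes "0 \<le> t - s" "real b ^ n * (t - s) < 1"
  shows "(frac (real b ^ n * s) \<le> frac (real b ^ n * t) \<and> frac (real b ^ n * t) - frac (real b ^ n * s) = real b ^ n * (t - s)) \<or>
         (frac (real b ^ n * t) < frac (real b ^ n * s) \<and> frac (real b ^ n * t) + 1 - frac (real b ^ n * s) = real b ^ n * (t - s))"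
proof -
  have "real b ^ n * s \<le> real b ^ n * t" using assms by (intro mult_left_mono) auto
  then show ?thesis using frac_arc[of "real b ^ n * t" "real b ^ n * s"] assms by (simp add: right_diff_distrib)
qed

definition K0 :: real where "K0 = 4 + 2 * C"

lemma nrm_dd_sqrt:
  assumes "0 \<le> t - s"
  shows "nrm M (dd t s n) \<le> K0 * sqrt (real b ^ n * (t - s))"
proof (cases "real b ^ n * (t - s) < 1")
  case True
  have d0: "0 \<le> real b ^ n * (t - s)" using assms by (intro mult_nonneg_nonneg) auto
  have "nrm M (dd t s n) \<le> (1 + 2 * C) * sqrt (real b ^ n * (t - s))"
  proof -
    show ?thesis
      unfolding dd_def[abs_def]
      using nrm_d_small[OF frac01 frac01 d0 _ arc_n[OF assms True]] True by simp
  qed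
  also have "\<dots> \<le> K0 * sqrt (real b ^ n * (t - s))" unfolding K0_def
    using d0 by (intro mult_right_mono) auto
  finally show ?thesis .
next
  case False
  then have "1 \<le> sqrt (real b ^ n * (t - s))" by simp
  then have "4 \<le> K0 * sqrt (real b ^ n * (t - s))" unfolding K0_def using Cpos
    using mult_mono[of 4 "4+2*C" 1 "sqrt (real b ^ n * (t - s))"] by simp
  then show ?thesis using nrm_dd4 by (rule order_trans[rotated])
qed


definition q :: real where "q = \<alpha> * sqrt (real b)"

lemma q_bounds: "0 \<le> q" "q < 1"
proof -
  show "0 \<le> q" unfolding q_def using alpha by simp
  have "q\<^sup>2 = \<alpha>\<^sup>2 * real b" unfolding q_def by (simp add: power_mult_distrib)
  then have "q\<^sup>2 < 1\<^sup>2" using ab by simp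
  then show "q < 1" by (rule power_less_imp_less_base) simp
qed

lemma X_eq: "Xproc \<alpha> b W \<kappa> t = (\<lambda>\<omega>. \<Sum>n. \<alpha>^n * bridge W \<kappa> (frac (real b ^ n * t)) \<omega>)"
  by (simp add: fun_eq_iff Xproc_def)

lemma X_meas[measurable]: "Xproc \<alpha> b W \<kappa> t \<in> borel_measurable M"
  unfolding X_eq by measurable

lemma sqrt_bh: "0 \<le> h \<Longrightarrow> sqrt (real b ^ n * h) = sqrt h * q ^ n / \<alpha> ^ n"
  using alpha by (simp add: q_def real_sqrt_mult real_sqrt_power power_mult_distrib)

lemma series_F:
  assumes h: "0 \<le> t - s"
  shows "sqi M (\<lambda>\<omega>. \<Sum>n. \<alpha>^n * dd t s n \<omega>) \<and>
         nrm M (\<lambda>\<omega>. \<Sum>n. \<alpha>^n * dd t s n \<omega>) \<le> (\<Sum>n. K0 * sqrt (t - s) * q ^ n)"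
proof (rule sqi_suminf)
  show "\<And>n. sqi M (\<lambda>\<omega>. \<alpha>^n * dd t s n \<omega>)" by (intro sqi_cmult dd_sqi)
  show "nrm M (\<lambda>\<omega>. \<alpha>^n * dd t s n \<omega>) \<le> K0 * sqrt (t - s) * q ^ n" for n
  proof -
    have "nrm M (\<lambda>\<omega>. \<alpha>^n * dd t s n \<omega>) = \<alpha>^n * nrm M (dd t s n)"
      using alpha by (simp add: nrm_cmult)
    also have "\<dots> \<le> \<alpha>^n * (K0 * sqrt (real b ^ n * (t - s)))"
      using alpha by (intro mult_left_mono nrm_dd_sqrt h) auto
    also have "\<dots> = K0 * sqrt (t - s) * q ^ n" using alpha h by (simp add: sqrt_bh)
    finally show ?thesis .
  qed
  show "summable (\<lambda>n. K0 * sqrt (t - s) * q ^ n)" using q_bounds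
    by (intro summable_mult summable_geometric) auto
  show "AE \<omega> in M. summable (\<lambda>n. \<alpha>^n * dd t s n \<omega>)" using AE_Xdiff[of t s] by auto
qed

lemma partA:
  assumes h: "0 \<le> t - s"
  shows "(\<integral>\<omega>. (Xproc \<alpha> b W \<kappa> t \<omega> - Xproc \<alpha> b W \<kappa> s \<omega>)\<^sup>2 \<partial>M) \<le> (K0 / (1 - q))\<^sup>2 * (t - s)"
proof -
  define F where "F = (\<lambda>\<omega>. \<Sum>n. \<alpha>^n * dd t s n \<omega>)"
  have Fm[measurable]: "F \<in> borel_measurable M" unfolding F_def by measurable
  note sF = series_F[OF h, folded F_def]
  have sm: "(\<Sum>n. K0 * sqrt (t - s) * q ^ n) = K0 * sqrt (t - s) / (1 - q)"
    using q_bounds suminf_mult[OF summable_geometric, of q "K0 * sqrt (t - s)"] suminf_geometric[of q]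
    by simp
  have "(\<integral>\<omega>. (Xproc \<alpha> b W \<kappa> t \<omega> - Xproc \<alpha> b W \<kappa> s \<omega>)\<^sup>2 \<partial>M) =
        ip M (\<lambda>\<omega>. Xproc \<alpha> b W \<kappa> t \<omega> - Xproc \<alpha> b W \<kappa> s \<omega>) (\<lambda>\<omega>. Xproc \<alpha> b W \<kappa> t \<omega> - Xproc \<alpha> b W \<kappa> s \<omega>)"
    by (simp add: ip_def power2_eq_square)
  also have "\<dots> = ip M F F"
    using AE_Xdiff[of t s] unfolding F_def by (intro ip_cong_AE) auto
  also have "\<dots> = (nrm M F)\<^sup>2" by (simp add: nrm_sq)
  also have "\<dots> \<le> (K0 * sqrt (t - s) / (1 - q))\<^sup>2"
    using sF sm nrm_nonneg by (intro power_mono) auto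
  also have "\<dots> = (K0 / (1 - q))\<^sup>2 * (t - s)" using h by (simp add: power_divide power_mult_distrib)
  finally show ?thesis .
qed


lemma geom_fin: "0 \<le> r \<Longrightarrow> r < 1 \<Longrightarrow> (\<Sum>n<N. r ^ n) \<le> 1 / (1 - r)" for r :: real
  by (simp add: sum_gp_strict divide_right_mono)

lemma bpow: "(real b ^ n * h) powr \<sigma> = (real b powr \<sigma>) ^ n * h powr \<sigma>"
proof -
  have "real b ^ n = real b powr (real n)" using bge by (simp add: powr_realpow)
  then have "(real b ^ n) powr \<sigma> = real b powr (real n * \<sigma>)" by (simp add: powr_powr)
  also have "\<dots> = (real b powr \<sigma>) ^ n" using bge by (simp add: powr_power)
  finally show ?thesis by (simp add: powr_mult)
qed

lemma partB_core:
  assumes h0: "0 < t - s" and N1: "1 \<le> N" and small: "\<And>n. n < N \<Longrightarrow> real b ^ n * (t - s) < 1"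
  shows "(\<integral>\<omega>. (Xproc \<alpha> b W \<kappa> t \<omega> - Xproc \<alpha> b W \<kappa> s \<omega>)\<^sup>2 \<partial>M) \<ge>
     (t - s) - 2 * (sqrt (t - s) / (1 - q)) * (4 * \<alpha>^N / (1 - \<alpha>) + 2 * C * (t - s) powr \<sigma> / (1 - \<alpha> * real b powr \<sigma>))"
proof -
  define h where "h = t - s"
  define x where "x n = frac (real b ^ n * t)" for n
  define y where "y n = frac (real b ^ n * s)" for n
  define w where "w n = wf (x n) (y n)" for n
  define c where "c n = (\<lambda>\<omega>. w n \<omega> - dd t s n \<omega>)" for n
  define P where "P = (\<lambda>\<omega>. \<Sum>n<N. \<alpha>^n * w n \<omega>)"
  define Ck where "Ck = (\<lambda>\<omega>. \<Sum>n<N. \<alpha>^n * c n \<omega>)"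
  define T where "T = (\<lambda>\<omega>. \<Sum>m. \<alpha>^(m+N) * dd t s (m+N) \<omega>)"
  define Q where "Q = (\<lambda>\<omega>. T \<omega> - Ck \<omega>)"
  define D where "D = (\<lambda>\<omega>. Xproc \<alpha> b W \<kappa> t \<omega> - Xproc \<alpha> b W \<kappa> s \<omega>)"
  have xy: "x n \<in> {0..1}" "y n \<in> {0..1}" for n unfolding x_def y_def by (rule frac01)+
  have arc: "(y n \<le> x n \<and> x n - y n = real b ^ n * h) \<or> (x n < y n \<and> x n + 1 - y n = real b ^ n * h)"
    if "n < N" for n
    unfolding x_def y_def h_def using arc_n[of t s n] h0 small[OF that] by simp
  have dpos: "0 \<le> real b ^ n * h" for n unfolding h_def using h0 by simp
  have wsq: "sqi M (w n)" for n unfolding w_def using xy by (rule wf_sqi)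
  have csq: "sqi M (c n)" for n unfolding c_def using wsq dd_sqi by (rule sqi_diff)
  have Psq: "sqi M P" unfolding P_def using wsq by (intro sqi_sum sqi_cmult)
  have Cksq: "sqi M Ck" unfolding Ck_def using csq by (intro sqi_sum sqi_cmult)
  have Tser: "sqi M T \<and> nrm M T \<le> (\<Sum>m. 4 * \<alpha>^(m+N))"
    unfolding T_def
  proof (rule sqi_suminf)
    show "sqi M (\<lambda>\<omega>. \<alpha>^(m+N) * dd t s (m+N) \<omega>)" for m by (intro sqi_cmult dd_sqi)
    show "nrm M (\<lambda>\<omega>. \<alpha>^(m+N) * dd t s (m+N) \<omega>) \<le> 4 * \<alpha>^(m+N)" for m
      using alpha nrm_dd4[of t s "m+N"] by (simp add: nrm_cmult mult.commute mult_left_mono)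
    show "summable (\<lambda>m. 4 * \<alpha>^(m+N))" using alpha
      by (intro summable_mult summable_ignore_initial_segment[where k=N] summable_geometric) auto
    show "AE \<omega> in M. summable (\<lambda>m. \<alpha>^(m+N) * dd t s (m+N) \<omega>)"
      using AE_Xdiff[of t s]
    proof eventually_elim
      case (elim \<omega>)
      then have "summable (\<lambda>n. \<alpha>^n * dd t s n \<omega>)" by simp
      from summable_ignore_initial_segment[OF this, of N] show ?case by simp
    qed
  qed
  have sT: "(\<Sum>m. 4 * \<alpha>^(m+N)) = 4 * \<alpha>^N / (1 - \<alpha>)"
  proof -
    have "(\<lambda>m. 4 * \<alpha>^(m+N)) = (\<lambda>m. (4 * \<alpha>^N) * \<alpha>^m)" by (simp add: power_add fun_eq_iff)
    then show ?thesis using alpha suminf_mult[OF summable_geometric, of \<alpha> "4 * \<alpha>^N"] suminf_geometric[of \<alpha>]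
      by simp
  qed
  have Tsq: "sqi M T" and nT: "nrm M T \<le> 4 * \<alpha>^N / (1 - \<alpha>)" using Tser sT by auto
  have Qsq: "sqi M Q" unfolding Q_def using Tsq Cksq by (rule sqi_diff)
  have Dm[measurable]: "D \<in> borel_measurable M" unfolding D_def by measurable
  have Pm[measurable]: "P \<in> borel_measurable M" using Psq by (rule sqi_meas)
  have Qm[measurable]: "Q \<in> borel_measurable M" using Qsq by (rule sqi_meas)
  have DPQ: "AE \<omega> in M. D \<omega> = P \<omega> + Q \<omega>"
    using AE_Xdiff[of t s]
  proof eventually_elim
    case (elim \<omega>)
    have "D \<omega> = (\<Sum>n. \<alpha>^n * dd t s n \<omega>)" using elim unfolding D_def by simp
    also have "\<dots> = T \<omega> + (\<Sum>n<N. \<alpha>^n * dd t s n \<omega>)"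
      unfolding T_def using elim by (intro suminf_split_initial_segment) auto
    also have "(\<Sum>n<N. \<alpha>^n * dd t s n \<omega>) = P \<omega> - Ck \<omega>"
      unfolding P_def Ck_def c_def by (simp add: sum_subtractf[symmetric] right_diff_distrib)
    finally show ?case unfolding Q_def by simp
  qed
  have nP: "nrm M P \<le> sqrt h / (1 - q)"
  proof -
    have "nrm M P \<le> (\<Sum>n<N. nrm M (\<lambda>\<omega>. \<alpha>^n * w n \<omega>))"
      unfolding P_def using wsq by (intro nrm_sum sqi_cmult)
    also have "\<dots> = (\<Sum>n<N. sqrt h * q ^ n)"
    proof (rule sum.cong)
      fix n assume "n \<in> {..<N}"
      then have "ip M (w n) (w n) = real b ^ n * h" unfolding w_def using xy arc by (intro ip_wf_self) auto
      then have "nrm M (w n) = sqrt (real b ^ n * h)" by (simp add: nrm_def)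
      then show "nrm M (\<lambda>\<omega>. \<alpha>^n * w n \<omega>) = sqrt h * q ^ n"
        using alpha h0 unfolding h_def by (simp add: nrm_cmult sqrt_bh)
    qed simp
    also have "\<dots> = sqrt h * (\<Sum>n<N. q ^ n)" by (simp add: sum_distrib_left)
    also have "\<dots> \<le> sqrt h * (1 / (1 - q))" using q_bounds h0 unfolding h_def by (intro mult_left_mono geom_fin) auto
    finally show ?thesis by simp
  qed
  have nCk: "nrm M Ck \<le> 2 * C * h powr \<sigma> / (1 - \<alpha> * real b powr \<sigma>)"
  proof -
    have "nrm M Ck \<le> (\<Sum>n<N. nrm M (\<lambda>\<omega>. \<alpha>^n * c n \<omega>))"
      unfolding Ck_def using csq by (intro nrm_sum sqi_cmult)
    also have "\<dots> \<le> (\<Sum>n<N. 2 * C * h powr \<sigma> * (\<alpha> * real b powr \<sigma>) ^ n)"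
    proof (rule sum_mono)
      fix n assume "n \<in> {..<N}"
      then have nn: "n < N" by simp
      have nl: "nrm M (c n) = nrm M (\<lambda>\<omega>. wf (x n) (y n) \<omega> - (bridge W \<kappa> (x n) \<omega> - bridge W \<kappa> (y n) \<omega>))"
        unfolding c_def w_def dd_def x_def y_def by simp
      have "nrm M (c n) \<le> 2 * C * (real b ^ n * h) powr \<sigma>"
        unfolding nl by (rule nrm_c[OF xy(1)[of n] xy(2)[of n] dpos[of n] arc[OF nn]])
      then have "nrm M (c n) \<le> 2 * C * ((real b powr \<sigma>) ^ n * h powr \<sigma>)" by (simp only: bpow)
      then have "\<alpha>^n * nrm M (c n) \<le> \<alpha>^n * (2 * C * ((real b powr \<sigma>) ^ n * h powr \<sigma>))"
        using alpha by (intro mult_left_mono) auto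
      also have "\<dots> = 2 * C * h powr \<sigma> * (\<alpha> * real b powr \<sigma>) ^ n"
        by (simp add: power_mult_distrib mult_ac)
      finally show "nrm M (\<lambda>\<omega>. \<alpha>^n * c n \<omega>) \<le> 2 * C * h powr \<sigma> * (\<alpha> * real b powr \<sigma>) ^ n"
        using alpha by (simp add: nrm_cmult)
    qed
    also have "\<dots> = 2 * C * h powr \<sigma> * (\<Sum>n<N. (\<alpha> * real b powr \<sigma>) ^ n)" by (simp add: sum_distrib_left)
    also have "\<dots> \<le> 2 * C * h powr \<sigma> * (1 / (1 - \<alpha> * real b powr \<sigma>))"
      using asig alpha Cpos h0 unfolding h_def by (intro mult_left_mono geom_fin) auto
    finally show ?thesis by simp
  qed
  have PP: "h \<le> ip M P P"
  proof -
    have "ip M P P = (\<Sum>n<N. \<alpha>^n * ip M (w n) P)"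
      unfolding P_def[of] using wsq Psq[unfolded P_def]
      by (simp add: ip_sum_left sqi_cmult ip_cmult_left)
    also have "\<dots> = (\<Sum>n<N. \<alpha>^n * (\<Sum>m<N. \<alpha>^m * ip M (w n) (w m)))"
      unfolding P_def using wsq by (simp add: ip_sum_right sqi_cmult ip_cmult_right)
    finally have e1: "ip M P P = (\<Sum>n<N. \<alpha>^n * (\<Sum>m<N. \<alpha>^m * ip M (w n) (w m)))" .
    have g1: "(\<Sum>n<N. \<alpha>^n * (\<Sum>m<N. \<alpha>^m * ip M (w n) (w m))) \<ge> \<alpha>^0 * (\<Sum>m<N. \<alpha>^m * ip M (w 0) (w m))"
      using N1 alpha xy unfolding w_def
      by (intro member_le_sum[where i=0 and f="\<lambda>n. \<alpha>^n * (\<Sum>m<N. \<alpha>^m * ip M (wf (x n) (y n)) (wf (x m) (y m)))"]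
          mult_nonneg_nonneg sum_nonneg ip_wf_nonneg) auto
    have g2: "(\<Sum>m<N. \<alpha>^m * ip M (w 0) (w m)) \<ge> \<alpha>^0 * ip M (w 0) (w 0)"
      using N1 alpha xy unfolding w_def
      by (intro member_le_sum[where i=0 and f="\<lambda>m. \<alpha>^m * ip M (wf (x 0) (y 0)) (wf (x m) (y m))"]
          mult_nonneg_nonneg ip_wf_nonneg) auto
    have e2: "ip M (w 0) (w 0) = h" unfolding w_def using xy arc[of 0] N1 by (subst ip_wf_self) auto
    show ?thesis using e1 g1 g2 e2 by simp
  qed
  have "(\<integral>\<omega>. (Xproc \<alpha> b W \<kappa> t \<omega> - Xproc \<alpha> b W \<kappa> s \<omega>)\<^sup>2 \<partial>M) = ip M D D"
    unfolding D_def by (simp add: ip_def power2_eq_square)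
  also have "\<dots> = ip M (\<lambda>\<omega>. P \<omega> + Q \<omega>) (\<lambda>\<omega>. P \<omega> + Q \<omega>)"
    using DPQ by (intro ip_cong_AE) auto
  also have "\<dots> = ip M P P + 2 * ip M P Q + ip M Q Q"
    using Psq Qsq by (simp add: ip_add_left ip_add_right sqi_add ip_comm[of M Q P])
  finally have e: "(\<integral>\<omega>. (Xproc \<alpha> b W \<kappa> t \<omega> - Xproc \<alpha> b W \<kappa> s \<omega>)\<^sup>2 \<partial>M) = ip M P P + 2 * ip M P Q + ip M Q Q" .
  have nQ: "nrm M Q \<le> 4 * \<alpha>^N / (1 - \<alpha>) + 2 * C * h powr \<sigma> / (1 - \<alpha> * real b powr \<sigma>)"
    using nrm_triangle_diff[OF Tsq Cksq] nT nCk unfolding Q_def by linarith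
  have "\<bar>ip M P Q\<bar> \<le> nrm M P * nrm M Q" by (rule CS[OF Psq Qsq])
  also have "\<dots> \<le> (sqrt h / (1 - q)) * (4 * \<alpha>^N / (1 - \<alpha>) + 2 * C * h powr \<sigma> / (1 - \<alpha> * real b powr \<sigma>))"
  proof -
    have hq: "0 \<le> sqrt h / (1 - q)" using q_bounds h0 unfolding h_def by simp
    show ?thesis using nP nQ nrm_nonneg[of M Q] hq by (intro mult_mono) auto
  qed
  finally have "\<bar>ip M P Q\<bar> \<le> (sqrt h / (1 - q)) * (4 * \<alpha>^N / (1 - \<alpha>) + 2 * C * h powr \<sigma> / (1 - \<alpha> * real b powr \<sigma>))" .
  then show ?thesis unfolding e using PP ip_self_nonneg[of M Q] unfolding h_def by linarith
qed


lemma partB: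
  assumes lam: "0 < lam" "lam < 1"
  shows "\<exists>\<epsilon>>0. \<forall>s t. 0 \<le> s \<longrightarrow> s < t \<longrightarrow> t - s < \<epsilon> \<longrightarrow>
     (\<integral>\<omega>. (Xproc \<alpha> b W \<kappa> t \<omega> - Xproc \<alpha> b W \<kappa> s \<omega>)\<^sup>2 \<partial>M) \<ge> lam * (t - s)"
proof -
  define \<eta> where "\<eta> = (1 - lam) * (1 - q) / 2"
  have q01: "0 \<le> q" "q < 1" by (rule q_bounds)+
  have \<eta>: "0 < \<eta>" unfolding \<eta>_def using lam q01 by simp
  define e1 where "e1 = \<eta> * (1 - \<alpha>) / 8"
  have e1: "0 < e1" unfolding e1_def using \<eta> alpha by simp
  obtain N0 where N0: "q ^ N0 < e1" using real_arch_pow_inv[OF e1 q01(2)] by blast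
  define r where "r = \<alpha> * real b powr \<sigma>"
  have r: "0 < 1 - r" unfolding r_def using asig by simp
  define e2 where "e2 = \<eta> * (1 - r) / (4 * C)"
  have e2: "0 < e2" unfolding e2_def using \<eta> r Cpos by simp
  define a where "a = \<sigma> - 1/2"
  have a: "0 < a" unfolding a_def using sig by simp
  have b1: "1 < real b" using bge by simp
  define \<epsilon> where "\<epsilon> = min (1 / real b ^ N0) (e2 powr (1 / a))"
  have \<epsilon>: "0 < \<epsilon>" unfolding \<epsilon>_def using e2 b1 by simp
  show ?thesis
  proof (intro exI[of _ \<epsilon>] conjI allI impI \<epsilon>)
    fix s t :: real
    assume s0: "0 \<le> s" and st: "s < t" and hs: "t - s < \<epsilon>"
    define h where "h = t - s"
    have h0: "0 < h" unfolding h_def using st by simp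
    have hN0: "real b ^ N0 * h < 1"
    proof -
      have "h < 1 / real b ^ N0" using hs unfolding h_def \<epsilon>_def by simp
      then show ?thesis using b1 by (simp add: field_simps)
    qed
    have ex: "\<exists>n. 1 \<le> real b ^ n * h"
    proof -
      obtain n where "1 / h < real b ^ n" using real_arch_pow[OF b1] by blast
      then have "1 \<le> real b ^ n * h" using h0 by (simp add: field_simps)
      then show ?thesis by blast
    qed
    define N where "N = (LEAST n. 1 \<le> real b ^ n * h)"
    have NI: "1 \<le> real b ^ N * h" unfolding N_def using ex by (rule LeastI_ex)
    have small: "real b ^ n * h < 1" if "n < N" for n
      using not_less_Least[OF that[unfolded N_def]] by simp
    have NN0: "N0 \<le> N"
    proof (rule ccontr)
      assume "\<not> N0 \<le> N"
      then have "real b ^ N \<le> real b ^ N0" using b1 by (intro power_increasing) auto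
      then have "real b ^ N * h \<le> real b ^ N0 * h" using h0 by (intro mult_right_mono) auto
      then show False using NI hN0 by simp
    qed
    have N1: "1 \<le> N"
    proof (rule ccontr)
      assume "\<not> 1 \<le> N"
      then have "N = 0" by simp
      then have "1 \<le> h" using NI by simp
      moreover have "h < 1" using hN0 b1
        by (smt (verit) h0 mult_le_cancel_right1 one_le_power)
      ultimately show False by simp
    qed
    note core = partB_core[of t s N, folded h_def, OF h0 N1 small]
    have "1 \<le> sqrt (real b ^ N * h)" using NI by simp
    also have "\<dots> = sqrt h * q ^ N / \<alpha> ^ N" using h0 by (intro sqrt_bh) simp
    finally have aN: "\<alpha> ^ N \<le> sqrt h * q ^ N" using alpha by (simp add: field_simps)
    have qN: "q ^ N \<le> e1"
    proof -
      have "q ^ N \<le> q ^ N0" using q01 NN0 by (intro power_decreasing) auto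
      then show ?thesis using N0 by simp
    qed
    have A: "4 * \<alpha>^N / (1 - \<alpha>) \<le> \<eta> / 2 * sqrt h"
    proof -
      have "4 * \<alpha>^N \<le> 4 * (sqrt h * e1)"
        using aN qN h0 by (smt (verit) mult_left_mono real_sqrt_ge_zero)
      then have "4 * \<alpha>^N / (1 - \<alpha>) \<le> 4 * (sqrt h * e1) / (1 - \<alpha>)"
        using alpha by (intro divide_right_mono) auto
      also have "\<dots> = \<eta> / 2 * sqrt h" unfolding e1_def using alpha by (simp add: field_simps)
      finally show ?thesis .
    qed
    have ha: "h powr a < e2"
    proof -
      have "h < e2 powr (1 / a)" using hs unfolding h_def \<epsilon>_def by simp
      then have "h powr a < (e2 powr (1 / a)) powr a" using a h0 by (intro powr_less_mono2) auto
      also have "\<dots> = e2" using a e2 by (simp add: powr_powr)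
      finally show ?thesis .
    qed
    have hs2: "h powr \<sigma> = h powr a * sqrt h"
    proof -
      have "h powr \<sigma> = h powr (a + 1/2)" unfolding a_def by simp
      also have "\<dots> = h powr a * h powr (1/2)" by (rule powr_add)
      finally show ?thesis using h0 by (simp add: powr_half_sqrt)
    qed
    have B: "2 * C * h powr \<sigma> / (1 - r) \<le> \<eta> / 2 * sqrt h"
    proof -
      have "2 * C * h powr \<sigma> \<le> 2 * C * (e2 * sqrt h)"
        unfolding hs2 using ha h0 Cpos by (intro mult_left_mono mult_right_mono) auto
      then have "2 * C * h powr \<sigma> / (1 - r) \<le> 2 * C * (e2 * sqrt h) / (1 - r)"
        using r by (intro divide_right_mono) auto
      also have "\<dots> = \<eta> / 2 * sqrt h" unfolding e2_def using r Cpos by (simp add: field_simps)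
      finally show ?thesis .
    qed
    have AB: "4 * \<alpha>^N / (1 - \<alpha>) + 2 * C * h powr \<sigma> / (1 - r) \<le> \<eta> * sqrt h" using A B by simp
    have "2 * (sqrt h / (1 - q)) * (4 * \<alpha>^N / (1 - \<alpha>) + 2 * C * h powr \<sigma> / (1 - r))
          \<le> 2 * (sqrt h / (1 - q)) * (\<eta> * sqrt h)"
      using AB q01 h0 by (intro mult_left_mono) auto
    also have "\<dots> = (2 * \<eta> / (1 - q)) * (sqrt h * sqrt h)" by (simp add: field_simps)
    also have "\<dots> = (2 * \<eta> / (1 - q)) * h" using h0 by simp
    also have "\<dots> = (1 - lam) * h" unfolding \<eta>_def using q01 by (simp add: field_simps)
    finally have "2 * (sqrt h / (1 - q)) * (4 * \<alpha>^N / (1 - \<alpha>) + 2 * C * h powr \<sigma> / (1 - r)) \<le> (1 - lam) * h" .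
    then show "(\<integral>\<omega>. (Xproc \<alpha> b W \<kappa> t \<omega> - Xproc \<alpha> b W \<kappa> s \<omega>)\<^sup>2 \<partial>M) \<ge> lam * (t - s)"
      using core unfolding h_def[symmetric] r_def by (simp add: algebra_simps)
  qed
qed

end

lemma sym_sq: "(\<integral>\<omega>. (X t \<omega> - X s \<omega>)\<^sup>2 \<partial>M) = (\<integral>\<omega>. (X s \<omega> - X t \<omega>)\<^sup>2 \<partial>M)"
  for X :: "real \<Rightarrow> 'a \<Rightarrow> real"
  by (simp add: power2_commute)

theorem lemma3p10:
  fixes M :: "'a measure" and W :: "real \<Rightarrow> 'a \<Rightarrow> real" and \<kappa> :: "real \<Rightarrow> real"
    and \<tau> \<alpha> :: real and b :: nat
  assumes BM: "std_brownian_motion M W"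
    and kappa_range: "\<forall>x\<in>{0..1}. \<kappa> x \<in> {0..1}"
    and kappa0: "\<kappa> 0 = 0" and kappa1: "\<kappa> 1 = 1"
    and tau: "\<tau> > 1/2" and holder: "holder_on {0..1} \<tau> \<kappa>"
    and alpha: "0 < \<alpha>" "\<alpha> < 1"
    and b: "b \<ge> 2"
    and ab: "\<alpha>\<^sup>2 * real b < 1"
  shows "(\<exists>L>0. \<forall>s\<in>{0..1}. \<forall>t\<in>{0..1}.
            (\<integral>\<omega>. (Xproc \<alpha> b W \<kappa> t \<omega> - Xproc \<alpha> b W \<kappa> s \<omega>)\<^sup>2 \<partial>M) \<le> L * \<bar>t - s\<bar>)
       \<and> (\<forall>lam\<in>{0<..<1}. \<exists>\<epsilon>>0. \<forall>s\<in>{0..1}. \<forall>t\<in>{0..1}. \<bar>t - s\<bar> < \<epsilon> \<longrightarrow>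
            (\<integral>\<omega>. (Xproc \<alpha> b W \<kappa> t \<omega> - Xproc \<alpha> b W \<kappa> s \<omega>)\<^sup>2 \<partial>M) \<ge> lam * \<bar>t - s\<bar>)"
proof -
  obtain C where C: "\<forall>x\<in>{0..1}. \<forall>y\<in>{0..1}. \<bar>\<kappa> x - \<kappa> y\<bar> \<le> C * \<bar>x - y\<bar> powr \<tau>"
    using holder unfolding holder_on_def by blast
  have C1: "1 \<le> C" using C[rule_format, of 1 0] kappa0 kappa1 by simp
  have b1: "1 < real b" using b by simp
  define \<gamma> where "\<gamma> = - ln \<alpha> / ln (real b)"
  have lnb: "0 < ln (real b)" using b1 by simp
  have "ln (\<alpha>\<^sup>2 * real b) < 0" using ab alpha b1 by simp
  then have "2 * ln \<alpha> + ln (real b) < 0" using alpha b1 by (simp add: ln_mult ln_realpow)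
  then have g: "1/2 < \<gamma>" unfolding \<gamma>_def using lnb by (simp add: field_simps)
  define \<sigma> where "\<sigma> = min \<tau> ((1/2 + \<gamma>) / 2)"
  have sig: "1/2 < \<sigma>" unfolding \<sigma>_def using tau g by simp
  have sg: "\<sigma> < \<gamma>"
  proof -
    have "(1/2 + \<gamma>) / 2 < \<gamma>" using g by simp
    then show ?thesis unfolding \<sigma>_def by linarith
  qed
  have st: "\<sigma> \<le> \<tau>" unfolding \<sigma>_def by simp
  have "real b powr \<sigma> < real b powr \<gamma>" using sg b1 by (rule powr_less_mono)
  also have "real b powr \<gamma> = exp (\<gamma> * ln (real b))" using b1 by (simp add: powr_def)
  also have "\<gamma> * ln (real b) = - ln \<alpha>" unfolding \<gamma>_def using lnb by simp
  also have "exp (- ln \<alpha>) = 1 / \<alpha>" using alpha by (simp add: exp_minus inverse_eq_divide)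
  finally have asig: "\<alpha> * real b powr \<sigma> < 1" using alpha by (simp add: field_simps)
  have hold: "\<forall>x\<in>{0..1}. \<forall>y\<in>{0..1}. \<bar>\<kappa> x - \<kappa> y\<bar> \<le> C * \<bar>x - y\<bar> powr \<sigma>"
  proof (intro ballI)
    fix x y :: real assume x: "x \<in> {0..1}" and y: "y \<in> {0..1}"
    have "\<bar>x - y\<bar> powr \<tau> \<le> \<bar>x - y\<bar> powr \<sigma>" using x y st by (intro powr_mono') auto
    then show "\<bar>\<kappa> x - \<kappa> y\<bar> \<le> C * \<bar>x - y\<bar> powr \<sigma>"
      using C x y C1 by (meson dual_order.trans mult_left_mono zero_le_one order_trans)
  qed
  interpret stp M W \<kappa> \<alpha> b C \<sigma>
    using BM kappa_range kappa0 kappa1 alpha b ab hold C1 sig asig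
    by unfold_locales auto
  show ?thesis
  proof (intro conjI)
    have Lpos: "0 < (K0 / (1 - q))\<^sup>2" using q_bounds C1 unfolding K0_def by simp
    show "\<exists>L>0. \<forall>s\<in>{0..1}. \<forall>t\<in>{0..1}.
            (\<integral>\<omega>. (Xproc \<alpha> b W \<kappa> t \<omega> - Xproc \<alpha> b W \<kappa> s \<omega>)\<^sup>2 \<partial>M) \<le> L * \<bar>t - s\<bar>"
    proof (intro exI[of _ "(K0 / (1 - q))\<^sup>2"] conjI Lpos ballI)
      fix s t :: real assume "s \<in> {0..1}" "t \<in> {0..1}"
      show "(\<integral>\<omega>. (Xproc \<alpha> b W \<kappa> t \<omega> - Xproc \<alpha> b W \<kappa> s \<omega>)\<^sup>2 \<partial>M) \<le> (K0 / (1 - q))\<^sup>2 * \<bar>t - s\<bar>"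
      proof (cases "s \<le> t")
        case True then show ?thesis using partA[where t=t and s=s] by simp
      next
        case False then show ?thesis using partA[where t=s and s=t] sym_sq[where X="Xproc \<alpha> b W \<kappa>" and t=t and s=s] by simp
      qed
    qed
    show "\<forall>lam\<in>{0<..<1}. \<exists>\<epsilon>>0. \<forall>s\<in>{0..1}. \<forall>t\<in>{0..1}. \<bar>t - s\<bar> < \<epsilon> \<longrightarrow>
            (\<integral>\<omega>. (Xproc \<alpha> b W \<kappa> t \<omega> - Xproc \<alpha> b W \<kappa> s \<omega>)\<^sup>2 \<partial>M) \<ge> lam * \<bar>t - s\<bar>"
    proof
      fix lam :: real assume "lam \<in> {0<..<1}"
      then obtain \<epsilon> where e: "\<epsilon> > 0" and E: "\<forall>s t. 0 \<le> s \<longrightarrow> s < t \<longrightarrow> t - s < \<epsilon> \<longrightarrow>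
        (\<integral>\<omega>. (Xproc \<alpha> b W \<kappa> t \<omega> - Xproc \<alpha> b W \<kappa> s \<omega>)\<^sup>2 \<partial>M) \<ge> lam * (t - s)"
        using partB[of lam] by auto
      show "\<exists>\<epsilon>>0. \<forall>s\<in>{0..1}. \<forall>t\<in>{0..1}. \<bar>t - s\<bar> < \<epsilon> \<longrightarrow>
            (\<integral>\<omega>. (Xproc \<alpha> b W \<kappa> t \<omega> - Xproc \<alpha> b W \<kappa> s \<omega>)\<^sup>2 \<partial>M) \<ge> lam * \<bar>t - s\<bar>"
      proof (intro exI[of _ \<epsilon>] conjI e ballI impI)
        fix s t :: real assume s: "s \<in> {0..1}" and t: "t \<in> {0..1}" and d: "\<bar>t - s\<bar> < \<epsilon>"
        consider "s < t" | "t < s" | "s = t" by linarith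
        then show "(\<integral>\<omega>. (Xproc \<alpha> b W \<kappa> t \<omega> - Xproc \<alpha> b W \<kappa> s \<omega>)\<^sup>2 \<partial>M) \<ge> lam * \<bar>t - s\<bar>"
        proof cases
          case 1 then show ?thesis using E[rule_format, of s t] s d by simp
        next
          case 2 then show ?thesis using E[rule_format, of t s] t d sym_sq[where X="Xproc \<alpha> b W \<kappa>" and t=t and s=s] by simp
        next
          case 3 then show ?thesis by simp
        qed
      qed
    qed
  qed
qed

end
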